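(* Denote by $a^+_{n,k}$, $a^-_{n,k}$ and $d^B_{n,k}$ the coefficient of $x^k$ in $f^+_n(x)$, $f^-_n(x)$ and $d^B_n(x)$, respectively. Then for all $n \ge 2$ and $k \ge 1$: $$ a^+_{n,k} = (2k-1)\, a^+_{n-1,k} + 2(n-k)\, a^+_{n-1,k-1} + 2(n-1)\, a^+_{n-2,k-1} + d^B_{n-1,k}, $$ $$ a^-_{n,k} = (2k-1)\, a^-_{n-1,k} + 2(n-k)\, a^-_{n-1,k-1} + 2(n-1)\, a^-_{n-2,k-1} + d^B_{n-1,k-1}. $$
   Context: A signed permutation of $[n]$ is a set $S = \{a_1, \dots, a_n\}$ with $a_i \in \{i, -i\}$, together with a bijection $w : S \to S$. - $a \in S$ is a $B$-excedance if $w(a) > a$, or if $a < 0$ and $w(a) = a$. - $w$ is a derangement if no $a \in S$ with $a > 0$ has $w(a) = a$. - $d^B_n(x) = \sum_{w \text{ derangement}} x^{\mathrm{exc}_B(w)}$, where $\mathrm{exc}_B(w)$ is the number of $B$-excedances, and $d^B_0 = 1$. - $f^+_n, f^-_n$ are the unique real polynomials with $d^B_n = f^+_n + f^-_n$, $f^+_n(x) = x^n f^+_n(1/x)$ and $f^-_n(x) = x^{n+1} f^-_n(1/x)$. *)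

theory Defs
  imports Complex_Main "HOL-Computational_Algebra.Polynomial"
begin

text \<open>A signed permutation of [n]: a set S = {a_1,...,a_n} with a_i in {i,-i},
  together with a bijection w : S -> S. The function w is normalised to be the
  identity outside S, so that each signed permutation has a unique representation.\<close>

definition signed_sets :: "nat \<Rightarrow> int set set" where
  "signed_sets n = {S. \<exists>\<sigma>::nat \<Rightarrow> int. (\<forall>i\<in>{1..n}. \<sigma> i = 1 \<or> \<sigma> i = -1)
                           \<and> S = (\<lambda>i. \<sigma> i * int i) ` {1..n}}"

definition signed_perms :: "nat \<Rightarrow> (int set \<times> (int \<Rightarrow> int)) set" where
  "signed_perms n = {(S, w). S \<in> signed_sets n \<and> bij_betw w S S \<and> (\<forall>x. x \<notin> S \<longrightarrow> w x = x)}"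

definition excB :: "int set \<Rightarrow> (int \<Rightarrow> int) \<Rightarrow> nat" where
  "excB S w = card {a \<in> S. w a > a \<or> (a < 0 \<and> w a = a)}"

definition is_derangement :: "int set \<Rightarrow> (int \<Rightarrow> int) \<Rightarrow> bool" where
  "is_derangement S w \<longleftrightarrow> \<not> (\<exists>a\<in>S. a > 0 \<and> w a = a)"

definition derangementsB :: "nat \<Rightarrow> (int set \<times> (int \<Rightarrow> int)) set" where
  "derangementsB n = {(S, w) \<in> signed_perms n. is_derangement S w}"

definition dB :: "nat \<Rightarrow> real poly" where
  "dB n = (\<Sum>(S, w)\<in>derangementsB n. monom 1 (excB S w))"

definition fplus :: "nat \<Rightarrow> real poly" where
  "fplus n = (THE p. \<exists>q. dB n = p + q
       \<and> (\<forall>x::real. x \<noteq> 0 \<longrightarrow> poly p x = x ^ n * poly p (1 / x))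
       \<and> (\<forall>x::real. x \<noteq> 0 \<longrightarrow> poly q x = x ^ (n + 1) * poly q (1 / x)))"

definition fminus :: "nat \<Rightarrow> real poly" where
  "fminus n = (THE q. \<exists>p. dB n = p + q
       \<and> (\<forall>x::real. x \<noteq> 0 \<longrightarrow> poly p x = x ^ n * poly p (1 / x))
       \<and> (\<forall>x::real. x \<noteq> 0 \<longrightarrow> poly q x = x ^ (n + 1) * poly q (1 / x)))"

end

theory Submission
  imports Defs "HOL-Combinatorics.Permutations"
begin

definition dp :: "nat set \<Rightarrow> (int set \<times> (int \<Rightarrow> int)) set" where
 "dp N = {(S,w). abs ` S = int ` N \<and> inj_on abs S \<and> w permutes S \<and> (\<forall>a\<in>S. a > 0 \<longrightarrow> w a \<noteq> a)}"

lemma signed_sets_eq: "signed_sets n = {S. abs ` S = int ` {1..n} \<and> inj_on abs S}"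
proof (intro set_eqI iffI)
  fix S assume "S \<in> signed_sets n"
  then obtain \<sigma> :: "nat \<Rightarrow> int" where s: "\<forall>i\<in>{1..n}. \<sigma> i = 1 \<or> \<sigma> i = -1"
     and S: "S = (\<lambda>i. \<sigma> i * int i) ` {1..n}" unfolding signed_sets_def by blast
  have a: "\<And>i. i \<in> {1..n} \<Longrightarrow> \<bar>\<sigma> i * int i\<bar> = int i"
  proof -
    fix i assume "i \<in> {1..n}" hence "\<sigma> i = 1 \<or> \<sigma> i = -1" using s by blast
    hence "\<bar>\<sigma> i\<bar> = 1" by auto
    thus "\<bar>\<sigma> i * int i\<bar> = int i" by (simp add: abs_mult)
  qed
  have "abs ` S = int ` {1..n}" unfolding S image_image using a by (auto intro!: image_cong)
  moreover have "inj_on abs S" unfolding S inj_on_def using a s by force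
  ultimately show "S \<in> {S. abs ` S = int ` {1..n} \<and> inj_on abs S}" by blast
next
  fix S assume "S \<in> {S. abs ` S = int ` {1..n} \<and> inj_on abs S}"
  hence A: "abs ` S = int ` {1..n}" and I: "inj_on abs S" by auto
  define \<sigma> where "\<sigma> i = (if int i \<in> S then 1 else (-1::int))" for i
  have "S = (\<lambda>i. \<sigma> i * int i) ` {1..n}"
  proof (intro set_eqI iffI)
    fix a assume aS: "a \<in> S"
    then obtain i where i: "i \<in> {1..n}" "\<bar>a\<bar> = int i" using A by (metis imageI imageE)
    have "a = \<sigma> i * int i"
    proof (cases "a = int i")
      case True thus ?thesis using aS by (simp add: \<sigma>_def)
    next
      case False hence a: "a = - int i" using i by auto
      have "int i \<notin> S"
      proof
        assume "int i \<in> S"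
        with I aS have "a = int i" using i by (auto simp: inj_on_def)
        with a i show False by auto
      qed
      thus ?thesis using a by (simp add: \<sigma>_def)
    qed
    thus "a \<in> (\<lambda>i. \<sigma> i * int i) ` {1..n}" using i by blast
  next
    fix a assume "a \<in> (\<lambda>i. \<sigma> i * int i) ` {1..n}"
    then obtain i where i: "i \<in> {1..n}" "a = \<sigma> i * int i" by blast
    obtain b where b: "b \<in> S" "\<bar>b\<bar> = int i" using A i(1) by (metis imageI imageE)
    show "a \<in> S"
    proof (cases "int i \<in> S")
      case True thus ?thesis using i by (simp add: \<sigma>_def)
    next
      case False hence "b = - int i" using b by (auto simp: abs_if split: if_splits)
      thus ?thesis using False i b by (simp add: \<sigma>_def)
    qed
  qed
  thus "S \<in> signed_sets n" unfolding signed_sets_def by (intro CollectI exI[of _ \<sigma>]) (auto simp: \<sigma>_def)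
qed

lemma derangementsB_eq: "derangementsB n = dp {1..n}"
  unfolding derangementsB_def signed_perms_def dp_def signed_sets_eq is_derangement_def
  by (auto intro: bij_imp_permutes permutes_imp_bij permutes_not_in)

definition ex :: "(int \<Rightarrow> int) \<Rightarrow> int \<Rightarrow> bool" where
  "ex w a \<longleftrightarrow> w a > a \<or> (a < 0 \<and> w a = a)"

lemma excB_ex: "excB S w = card {a\<in>S. ex w a}"
  unfolding excB_def ex_def by simp

lemma card_filter_sum: "finite S \<Longrightarrow> card {a\<in>S. P a} = (\<Sum>a\<in>S. if P a then 1 else 0)"
  using sum.inter_filter[of S "\<lambda>_. 1::nat" P] by simp

lemma excB_sum: "finite S \<Longrightarrow> excB S w = (\<Sum>a\<in>S. if ex w a then 1 else 0)"
  unfolding excB_ex by (rule card_filter_sum)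

definition fA :: "nat \<Rightarrow> int set \<times> (int \<Rightarrow> int) \<Rightarrow> int set \<times> (int \<Rightarrow> int)" where
  "fA m x = (insert (- int m) (fst x), snd x)"
definition fB :: "nat \<Rightarrow> (int set \<times> (int \<Rightarrow> int)) \<times> (int \<times> int) \<Rightarrow> int set \<times> (int \<Rightarrow> int)" where
  "fB m x = (case x of ((S,w),(a,s)) \<Rightarrow> (insert (s * int m) S, w \<circ> transpose a (s * int m)))"
definition fC :: "nat \<Rightarrow> nat \<times> ((int set \<times> (int \<Rightarrow> int)) \<times> int) \<Rightarrow> int set \<times> (int \<Rightarrow> int)" where
  "fC m x = (case x of (j,((T,v),s)) \<Rightarrow> (insert (int j) (insert (s * int m) T), v \<circ> transpose (int j) (s * int m)))"

lemma abs_in_helper: "\<bar>x\<bar> \<in> int ` N \<Longrightarrow> x \<in> int ` N \<union> (\<lambda>i. - int i) ` N"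
proof -
  assume "\<bar>x\<bar> \<in> int ` N"
  then obtain i where i: "i \<in> N" "\<bar>x\<bar> = int i" by blast
  hence "x = int i \<or> x = - int i" by arith
  thus ?thesis using i by auto
qed

lemma dp_finite_S: "(S,w) \<in> dp N \<Longrightarrow> finite N \<Longrightarrow> finite S"
proof -
  assume a: "(S,w) \<in> dp N" "finite N"
  have "S \<subseteq> int ` N \<union> (\<lambda>i. - int i) ` N"
  proof
    fix x assume "x \<in> S"
    hence "\<bar>x\<bar> \<in> int ` N" using a unfolding dp_def by auto
    thus "x \<in> int ` N \<union> (\<lambda>i. - int i) ` N" by (rule abs_in_helper)
  qed
  thus ?thesis using a(2) finite_subset by blast
qed

lemma dp_card: "(S,w) \<in> dp N \<Longrightarrow> card S = card N"
proof -
  assume a: "(S,w) \<in> dp N"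
  hence i: "inj_on abs S" and e: "abs ` S = int ` N" unfolding dp_def by auto
  have "card S = card (abs ` S)" using i by (simp add: card_image)
  also have "\<dots> = card (int ` N)" using e by simp
  also have "\<dots> = card N" by (simp add: card_image)
  finally show ?thesis .
qed

lemma finite_dp: "finite N \<Longrightarrow> finite (dp N)"
proof -
  assume fN: "finite N"
  let ?U = "int ` N \<union> (\<lambda>i. - int i) ` N"
  have "dp N \<subseteq> Sigma (Pow ?U) (\<lambda>S. {p. p permutes S})"
  proof
    fix x assume x: "x \<in> dp N"
    obtain S w where [simp]: "x = (S,w)" by fastforce
    have "S \<subseteq> ?U"
    proof
      fix y assume "y \<in> S"
      hence "\<bar>y\<bar> \<in> int ` N" using x unfolding dp_def by auto
      thus "y \<in> ?U" by (rule abs_in_helper)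
    qed
    thus "x \<in> Sigma (Pow ?U) (\<lambda>S. {p. p permutes S})" using x unfolding dp_def by auto
  qed
  moreover have "finite (Sigma (Pow ?U) (\<lambda>S. {p. p permutes S}))"
  proof (rule finite_SigmaI)
    show "finite (Pow ?U)" using fN by simp
    fix S assume "S \<in> Pow ?U"
    hence "finite S" using fN by (meson PowD finite_Un finite_imageI finite_subset)
    thus "finite {p. p permutes S}" by (rule finite_permutations)
  qed
  ultimately show ?thesis using finite_subset by blast
qed

lemma excB_le: "finite S \<Longrightarrow> excB S w \<le> card S"
  unfolding excB_def by (intro card_mono) auto

definition cf :: "nat set \<Rightarrow> nat \<Rightarrow> real" where
  "cf N k = (\<Sum>x\<in>dp N. if excB (fst x) (snd x) = k then 1 else 0)"

lemma cf_big: "finite N \<Longrightarrow> k > card N \<Longrightarrow> cf N k = 0"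
  unfolding cf_def
proof (intro sum.neutral ballI)
  fix x assume "finite N" "k > card N" "x \<in> dp N"
  moreover obtain S w where [simp]: "x = (S,w)" by fastforce
  ultimately have "excB S w \<le> card N"
    using excB_le[OF dp_finite_S[of S w N]] dp_card[of S w N] by simp
  thus "(if excB (fst x) (snd x) = k then 1 else 0) = (0::real)" using \<open>k > card N\<close> by auto
qed

lemma dp_empty: "dp {} = {({}, id)}"
  unfolding dp_def by auto

lemma cf_empty: "cf {} k = (if k = 0 then 1 else 0)"
  unfolding cf_def dp_empty by (simp add: excB_def)

lemma dp_D: "(S,w) \<in> dp M \<Longrightarrow> abs ` S = int ` M \<and> inj_on abs S \<and> w permutes S \<and> (\<forall>a\<in>S. a > 0 \<longrightarrow> w a \<noteq> a)"
  unfolding dp_def by simp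

lemma dp_abs: "(S,w) \<in> dp M \<Longrightarrow> abs ` S = int ` M" unfolding dp_def by simp
lemma dp_inj: "(S,w) \<in> dp M \<Longrightarrow> inj_on abs S" unfolding dp_def by simp
lemma dp_perm: "(S,w) \<in> dp M \<Longrightarrow> w permutes S" unfolding dp_def by simp
lemma dp_der: "(S,w) \<in> dp M \<Longrightarrow> a \<in> S \<Longrightarrow> a > 0 \<Longrightarrow> w a \<noteq> a" unfolding dp_def by simp

lemma dp_I: "abs ` S = int ` M \<Longrightarrow> inj_on abs S \<Longrightarrow> w permutes S \<Longrightarrow> (\<And>a. a\<in>S \<Longrightarrow> a > 0 \<Longrightarrow> w a \<noteq> a) \<Longrightarrow> (S,w) \<in> dp M"
  unfolding dp_def by blast

lemma dp_elem: "(S,w) \<in> dp M \<Longrightarrow> a \<in> S \<Longrightarrow> \<exists>i\<in>M. \<bar>a\<bar> = int i"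
proof -
  assume d: "(S,w) \<in> dp M" and a: "a \<in> S"
  have e: "abs ` S = int ` M" using dp_D[OF d] by simp
  have "\<bar>a\<bar> \<in> abs ` S" using a by (rule imageI)
  hence "\<bar>a\<bar> \<in> int ` M" by (simp only: e)
  thus ?thesis by blast
qed

lemma comp_transpose_twice: "(f \<circ> transpose a b) \<circ> transpose a b = f"
  by (simp add: comp_assoc)

context
  fixes N :: "nat set" and m :: nat
  assumes fN: "finite N" and z: "0 \<notin> N" and mN: "m \<in> N" and mx: "\<forall>i\<in>N. i \<le> m"
begin

lemma m_pos: "m > 0" using z mN by (cases m) auto

lemma small: "(S,w) \<in> dp M \<Longrightarrow> M \<subseteq> N - {m} \<Longrightarrow> a \<in> S \<Longrightarrow> \<bar>a\<bar> < int m \<and> a \<noteq> 0"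
proof -
  assume a: "(S,w) \<in> dp M" "M \<subseteq> N - {m}" "a \<in> S"
  then obtain i where i: "i \<in> M" "\<bar>a\<bar> = int i" using dp_elem by blast
  hence "i \<in> N" "i \<noteq> m" using a by auto
  have "i \<le> m" using mx \<open>i \<in> N\<close> by blast
  hence "i < m" using \<open>i \<noteq> m\<close> by simp
  have "i \<noteq> 0" using z \<open>i \<in> N\<close> by metis
  thus ?thesis using i \<open>i < m\<close> by simp
qed

lemma notin_small: "(S,w) \<in> dp M \<Longrightarrow> M \<subseteq> N - {m} \<Longrightarrow> \<bar>t\<bar> = int m \<Longrightarrow> t \<notin> S"
  using small by fastforce

lemma sm_abs: "s \<in> {1,-1} \<Longrightarrow> \<bar>s * int m\<bar> = int m"
  by (auto simp: abs_mult)

definition "DA = dp (N - {m})"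
definition "DB = Sigma (dp (N - {m})) (\<lambda>x. fst x \<times> {1,-1::int})"
definition "DC = Sigma (N - {m}) (\<lambda>j. dp (N - {m} - {j}) \<times> {1,-1::int})"

lemma intN: "insert (int m) (int ` (N - {m})) = int ` N"
  using mN by auto

lemma fA_in: "x \<in> DA \<Longrightarrow> fA m x \<in> dp N"
proof -
  assume "x \<in> DA"
  then obtain S w where x: "x = (S,w)" and d: "(S,w) \<in> dp (N - {m})" unfolding DA_def by (cases x) auto
  note D = dp_D[OF d]
  have nt: "- int m \<notin> S" using notin_small[OF d] by simp
  show ?thesis unfolding x fA_def fst_conv snd_conv
  proof (rule dp_I)
    show "abs ` insert (- int m) S = int ` N" using D intN by simp
    have "int m \<notin> abs ` S" using D by auto
    thus "inj_on abs (insert (- int m) S)" using D nt by (simp add: inj_on_insert)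
    show "w permutes insert (- int m) S" by (rule permutes_subset[OF dp_perm[OF d]]) auto
    fix a assume "a \<in> insert (- int m) S" "a > 0" thus "w a \<noteq> a" using dp_der[OF d] by auto
  qed
qed

lemma perm_ins: "w permutes S \<Longrightarrow> a \<in> insert t S \<Longrightarrow> (w \<circ> transpose a t) permutes insert t S"
proof -
  assume w: "w permutes S" and a: "a \<in> insert t S"
  have "w permutes insert t S" using w by (rule permutes_subset) auto
  moreover have "transpose a t permutes insert t S" using a by (intro permutes_swap_id) auto
  ultimately show ?thesis by (rule permutes_compose[rotated])
qed

lemma fB_in: "x \<in> DB \<Longrightarrow> fB m x \<in> dp N"
proof -
  assume "x \<in> DB"
  then obtain S w a s where x: "x = ((S,w),(a,s))" and d: "(S,w) \<in> dp (N - {m})" and a: "a \<in> S"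
    and s: "s \<in> {1,-1}" unfolding DB_def by (cases x) auto
  note D = dp_D[OF d]
  define t where "t = s * int m"
  have at: "\<bar>t\<bar> = int m" using s unfolding t_def by (rule sm_abs)
  have nt: "t \<notin> S" using notin_small[OF d _ at] by simp
  have wt: "w t = t" using D nt permutes_not_in by metis
  have wa: "w a \<in> S" using D a permutes_in_image by metis
  show ?thesis unfolding x fB_def prod.case t_def[symmetric]
  proof (rule dp_I)
    show "abs ` insert t S = int ` N" using D intN at by simp
    have "int m \<notin> abs ` S" using D by auto
    thus "inj_on abs (insert t S)" using D nt at by (simp add: inj_on_insert)
    show "(w \<circ> transpose a t) permutes insert t S" using D a by (intro perm_ins) auto
    fix y assume y: "y \<in> insert t S" "y > 0"
    show "(w \<circ> transpose a t) y \<noteq> y"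
    proof (cases "y = t")
      case True thus ?thesis using wa nt a by (auto simp: transpose_def)
    next
      case False
      show ?thesis
      proof (cases "y = a")
        case True thus ?thesis using wt nt a by (auto simp: transpose_def)
      next
        case False
        hence "(w \<circ> transpose a t) y = w y" using \<open>y \<noteq> t\<close> by simp
        thus ?thesis using D y \<open>y \<noteq> t\<close> by auto
      qed
    qed
  qed
qed

lemma fC_in: "x \<in> DC \<Longrightarrow> fC m x \<in> dp N"
proof -
  assume "x \<in> DC"
  then obtain j T v s where x: "x = (j,((T,v),s))" and j: "j \<in> N - {m}" and d: "(T,v) \<in> dp (N - {m} - {j})"
    and s: "s \<in> {1,-1}" unfolding DC_def by (cases x) auto
  note D = dp_D[OF d]
  define t where "t = s * int m"
  have at: "\<bar>t\<bar> = int m" using s unfolding t_def by (rule sm_abs)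
  have nt: "t \<notin> T" using notin_small[OF d _ at] by auto
  have jpos: "int j > 0" using j z by (cases j) auto
  have jt: "int j \<noteq> t" using at j by auto
  have nj: "int j \<notin> T"
  proof
    assume "int j \<in> T"
    hence "\<bar>int j\<bar> \<in> abs ` T" by (rule imageI)
    hence "int j \<in> int ` (N - {m} - {j})" using D by simp
    thus False by auto
  qed
  have vt: "v t = t" using D nt permutes_not_in by metis
  have vj: "v (int j) = int j" using D nj permutes_not_in by metis
  show ?thesis unfolding x fC_def prod.case t_def[symmetric]
  proof (rule dp_I)
    have "insert (int j) (insert (int m) (int ` (N - {m} - {j}))) = int ` N" using j mN by auto
    thus "abs ` insert (int j) (insert t T) = int ` N" using D at by simp
    have "int m \<notin> abs ` T" using D by auto
    hence "inj_on abs (insert t T)" using D nt at by (simp add: inj_on_insert)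
    moreover have "int j \<notin> abs ` (insert t T)" using D at j by auto
    ultimately show "inj_on abs (insert (int j) (insert t T))" using nj jt by (simp add: inj_on_insert)
    have "v permutes insert t T" by (rule permutes_subset[OF dp_perm[OF d]]) auto
    thus "(v \<circ> transpose (int j) t) permutes insert (int j) (insert t T)"
    proof -
      assume v: "v permutes insert t T"
      have "v permutes insert (int j) (insert t T)" using v by (rule permutes_subset) auto
      moreover have "transpose (int j) t permutes insert (int j) (insert t T)" by (intro permutes_swap_id) auto
      ultimately show ?thesis by (rule permutes_compose[rotated])
    qed
    fix y assume y: "y \<in> insert (int j) (insert t T)" "y > 0"
    show "(v \<circ> transpose (int j) t) y \<noteq> y"
    proof (cases "y = t")
      case True thus ?thesis using vj jt by (auto simp: transpose_def)
    next
      case False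
      show ?thesis
      proof (cases "y = int j")
        case True thus ?thesis using vt jt by (auto simp: transpose_def)
      next
        case False
        hence "(v \<circ> transpose (int j) t) y = v y" using \<open>y \<noteq> t\<close> by simp
        thus ?thesis using D y \<open>y \<noteq> t\<close> False by auto
      qed
    qed
  qed
qed

lemma abs_diff: "inj_on abs S2 \<Longrightarrow> t \<in> S2 \<Longrightarrow> abs ` (S2 - {t}) = abs ` S2 - {\<bar>t\<bar>}"
  by (auto simp: inj_on_def)

lemma cover: "y \<in> dp N \<Longrightarrow> y \<in> fA m ` DA \<union> fB m ` DB \<union> fC m ` DC"
proof -
  assume "y \<in> dp N"
  then obtain S2 w2 where y: "y = (S2,w2)" and d: "(S2,w2) \<in> dp N" by (cases y) auto
  have ab: "abs ` S2 = int ` N" using dp_abs[OF d] .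
  have inj: "inj_on abs S2" using dp_inj[OF d] .
  have p2: "w2 permutes S2" using dp_perm[OF d] .
  have "int m \<in> abs ` S2" using ab mN by simp
  then obtain t where tS: "t \<in> S2" and at: "\<bar>t\<bar> = int m" by auto
  define S where "S = S2 - {t}"
  have absS: "abs ` S = int ` (N - {m})" unfolding S_def using abs_diff[OF inj tS] ab at by auto
  have injS: "inj_on abs S" unfolding S_def using inj by (rule inj_on_subset) auto
  define s where "s = (if t > 0 then 1 else (-1::int))"
  have s: "s \<in> {1,-1}" and ts: "t = s * int m" unfolding s_def using at by auto
  have ins: "insert t S = S2" unfolding S_def using tS by auto
  have tnS: "t \<notin> S" unfolding S_def by simp
  show ?thesis
  proof (cases "w2 t = t")
    case True
    have "t \<le> 0" using dp_der[OF d tS] True by force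
    hence tm: "t = - int m" using at by simp
    have "w2 permutes S" using p2 by (rule permutes_superset) (use True in \<open>auto simp: S_def\<close>)
    hence "(S,w2) \<in> DA" unfolding DA_def using absS injS dp_der[OF d] by (intro dp_I) (auto simp: S_def)
    moreover have "fA m (S,w2) = y" unfolding fA_def y using ins tm by simp
    ultimately show ?thesis by blast
  next
    case False
    have "t \<in> w2 ` S2" using tS permutes_image[OF p2] by simp
    then obtain a where aS2: "a \<in> S2" and wa: "w2 a = t" by auto
    define b where "b = w2 t"
    have bS2: "b \<in> S2" unfolding b_def using tS permutes_in_image[OF p2] by simp
    have at': "a \<noteq> t" using False wa by auto
    have bt: "b \<noteq> t" using False b_def by simp
    have aS: "a \<in> S" and bS: "b \<in> S" unfolding S_def using aS2 bS2 at' bt by auto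
    show ?thesis
    proof (cases "a = b \<and> b > 0")
      case True
      define j where "j = nat b"
      have bj: "b = int j" unfolding j_def using True by simp
      have "\<bar>b\<bar> \<in> abs ` S" using bS by (rule imageI)
      hence jN: "j \<in> N - {m}" using absS bj by auto
      define T where "T = S - {b}"
      define v where "v = w2 \<circ> transpose b t"
      have absT: "abs ` T = int ` (N - {m} - {j})" unfolding T_def using abs_diff[OF injS bS] absS bj by auto
      have injT: "inj_on abs T" unfolding T_def using injS by (rule inj_on_subset) auto
      have w2b: "w2 b = t" using True wa by simp
      have vp: "v permutes S2" unfolding v_def using tS bS2 p2 by (intro permutes_compose[rotated] permutes_swap_id) auto
      have vb: "v b = b" unfolding v_def b_def by simp
      have vt: "v t = t" unfolding v_def using w2b by simp
      have "v permutes T" using vp by (rule permutes_superset) (use vb vt in \<open>auto simp: T_def S_def\<close>)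
      moreover have "\<And>x. x \<in> T \<Longrightarrow> x > 0 \<Longrightarrow> v x \<noteq> x"
      proof -
        fix x assume x: "x \<in> T" "x > 0"
        hence "x \<noteq> b" "x \<noteq> t" "x \<in> S2" unfolding T_def S_def by auto
        hence "v x = w2 x" unfolding v_def by simp
        thus "v x \<noteq> x" using dp_der[OF d \<open>x \<in> S2\<close> \<open>x > 0\<close>] by simp
      qed
      ultimately have "(T,v) \<in> dp (N - {m} - {j})" using absT injT by (intro dp_I)
      hence "(j,((T,v),s)) \<in> DC" unfolding DC_def using jN s by simp
      moreover have "fC m (j,((T,v),s)) = y"
      proof -
        have "insert (int j) (insert (s * int m) T) = S2" using ins bS unfolding T_def ts[symmetric] bj[symmetric] by auto
        moreover have "v \<circ> transpose (int j) (s * int m) = w2" unfolding v_def ts[symmetric] bj[symmetric]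
          by (rule comp_transpose_twice)
        ultimately show ?thesis unfolding fC_def y by simp
      qed
      ultimately show ?thesis by blast
    next
      case False
      define w where "w = w2 \<circ> transpose a t"
      have wp: "w permutes S2" unfolding w_def using tS aS2 p2 by (intro permutes_compose[rotated] permutes_swap_id) auto
      have wt: "w t = t" unfolding w_def using wa by simp
      have wab: "w a = b" unfolding w_def b_def by simp
      have "w permutes S" using wp by (rule permutes_superset) (use wt in \<open>auto simp: S_def\<close>)
      moreover have "\<And>x. x \<in> S \<Longrightarrow> x > 0 \<Longrightarrow> w x \<noteq> x"
      proof -
        fix x assume x: "x \<in> S" "x > 0"
        show "w x \<noteq> x"
        proof (cases "x = a")
          case True thus ?thesis using wab False x by auto
        next
          case False
          hence "w x = w2 x" using x unfolding w_def S_def by simp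
          thus "w x \<noteq> x" using dp_der[OF d _ \<open>x > 0\<close>] x unfolding S_def by simp
        qed
      qed
      ultimately have "(S,w) \<in> dp (N - {m})" using absS injS by (intro dp_I)
      hence "((S,w),(a,s)) \<in> DB" unfolding DB_def using aS s by simp
      moreover have "fB m ((S,w),(a,s)) = y"
      proof -
        have "w \<circ> transpose a (s * int m) = w2" unfolding w_def ts[symmetric] by (rule comp_transpose_twice)
        thus ?thesis unfolding fB_def y using ins ts by simp
      qed
      ultimately show ?thesis by blast
    qed
  qed
qed

lemma DB_D: "x \<in> DB \<Longrightarrow> \<exists>S w a s. x = ((S,w),(a,s)) \<and> (S,w) \<in> dp (N - {m}) \<and> a \<in> S \<and> s \<in> {1,-1}"
  unfolding DB_def by (cases x) auto

lemma DC_D: "x \<in> DC \<Longrightarrow> \<exists>j T v s. x = (j,((T,v),s)) \<and> j \<in> N - {m} \<and> (T,v) \<in> dp (N - {m} - {j}) \<and> s \<in> {1,-1}"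
  unfolding DC_def by (cases x) auto

lemma DA_D: "x \<in> DA \<Longrightarrow> \<exists>S w. x = (S,w) \<and> (S,w) \<in> dp (N - {m})"
  unfolding DA_def by (cases x) auto

lemma j_props: "j \<in> N - {m} \<Longrightarrow> (T,v) \<in> dp (N - {m} - {j}) \<Longrightarrow> int j \<notin> T \<and> int j > 0 \<and> v (int j) = int j"
proof -
  assume j: "j \<in> N - {m}" and d: "(T,v) \<in> dp (N - {m} - {j})"
  have nj: "int j \<notin> T"
  proof
    assume "int j \<in> T"
    hence "\<bar>int j\<bar> \<in> abs ` T" by (rule imageI)
    hence "int j \<in> int ` (N - {m} - {j})" using dp_abs[OF d] by simp
    thus False by auto
  qed
  have jp: "int j > 0" using j z by (cases j) auto
  have vj: "v (int j) = int j" using permutes_not_in[OF dp_perm[OF d] nj] .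
  show ?thesis using nj jp vj by (intro conjI)
qed

lemma disjAB: "fA m ` DA \<inter> fB m ` DB = {}"
proof (rule ccontr)
  assume "fA m ` DA \<inter> fB m ` DB \<noteq> {}"
  then obtain z where z1: "z \<in> fA m ` DA" and z2: "z \<in> fB m ` DB" by blast
  from z1 obtain x where x: "x \<in> DA" and zx: "z = fA m x" by blast
  from z2 obtain y where y: "y \<in> DB" and zy: "z = fB m y" by blast
  have e: "fA m x = fB m y" using zx zy by simp
  obtain S w where xx: "x = (S,w)" and d: "(S,w) \<in> dp (N - {m})" using DA_D[OF x] by blast
  obtain S' w' a s where yy: "y = ((S',w'),(a,s))" and d': "(S',w') \<in> dp (N - {m})" and a: "a \<in> S'"
    and s: "s \<in> {1,-1}" using DB_D[OF y] by blast
  define t where "t = s * int m"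
  have at: "\<bar>t\<bar> = int m" using s unfolding t_def by (rule sm_abs)
  have e1: "insert (- int m) S = insert t S'" and e2: "w = w' \<circ> transpose a t"
    using e unfolding xx yy fA_def fB_def t_def by simp_all
  have "- int m \<notin> S'" using notin_small[OF d', of "- int m"] by simp
  moreover have "- int m \<in> insert t S'" by (metis e1 insertI1)
  ultimately have tm: "t = - int m" by auto
  have "t \<notin> S" using notin_small[OF d _ at] by simp
  hence "w t = t" using permutes_not_in[OF dp_perm[OF d]] by simp
  moreover have "w' a \<in> S'" using a permutes_in_image[OF dp_perm[OF d']] by simp
  moreover have "t \<notin> S'" using notin_small[OF d' _ at] by simp
  ultimately show False using e2 by (metis comp_apply transpose_apply_second)
qed

lemma disjAC: "fA m ` DA \<inter> fC m ` DC = {}"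
proof (rule ccontr)
  assume "fA m ` DA \<inter> fC m ` DC \<noteq> {}"
  then obtain z where z1: "z \<in> fA m ` DA" and z2: "z \<in> fC m ` DC" by blast
  from z1 obtain x where x: "x \<in> DA" and zx: "z = fA m x" by blast
  from z2 obtain y where y: "y \<in> DC" and zy: "z = fC m y" by blast
  have e: "fA m x = fC m y" using zx zy by simp
  obtain S w where xx: "x = (S,w)" and d: "(S,w) \<in> dp (N - {m})" using DA_D[OF x] by blast
  obtain j T v s where yy: "y = (j,((T,v),s))" and j: "j \<in> N - {m}" and d': "(T,v) \<in> dp (N - {m} - {j})"
    and s: "s \<in> {1,-1}" using DC_D[OF y] by blast
  define t where "t = s * int m"
  have at: "\<bar>t\<bar> = int m" using s unfolding t_def by (rule sm_abs)
  have e1: "insert (- int m) S = insert (int j) (insert t T)" and e2: "w = v \<circ> transpose (int j) t"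
    using e unfolding xx yy fA_def fC_def t_def by simp_all
  have J: "int j \<notin> T" "int j > 0" "v (int j) = int j" using j_props[OF j d'] by auto
  have "- int m \<notin> T" using notin_small[OF d', of "- int m"] by auto
  moreover have "- int m \<in> insert (int j) (insert t T)" by (metis e1 insertI1)
  ultimately have tm: "t = - int m" using J(2) by auto
  have "t \<notin> S" using notin_small[OF d _ at] by simp
  hence "w t = t" using permutes_not_in[OF dp_perm[OF d]] by simp
  moreover have "(v \<circ> transpose (int j) t) t = int j" using J by simp
  ultimately show False using e2 tm J(2) by simp
qed

lemma disjBC: "fB m ` DB \<inter> fC m ` DC = {}"
proof (rule ccontr)
  assume "fB m ` DB \<inter> fC m ` DC \<noteq> {}"
  then obtain z where z1: "z \<in> fB m ` DB" and z2: "z \<in> fC m ` DC" by blast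
  from z1 obtain x where x: "x \<in> DB" and zx: "z = fB m x" by blast
  from z2 obtain y where y: "y \<in> DC" and zy: "z = fC m y" by blast
  have e: "fB m x = fC m y" using zx zy by simp
  obtain S w a s where xx: "x = ((S,w),(a,s))" and d: "(S,w) \<in> dp (N - {m})" and a: "a \<in> S"
    and s: "s \<in> {1,-1}" using DB_D[OF x] by blast
  obtain j T v s' where yy: "y = (j,((T,v),s'))" and j: "j \<in> N - {m}" and d': "(T,v) \<in> dp (N - {m} - {j})"
    and s': "s' \<in> {1,-1}" using DC_D[OF y] by blast
  define t where "t = s * int m"
  define t' where "t' = s' * int m"
  have at: "\<bar>t\<bar> = int m" using s unfolding t_def by (rule sm_abs)
  have at': "\<bar>t'\<bar> = int m" using s' unfolding t'_def by (rule sm_abs)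
  have e1: "insert t S = insert (int j) (insert t' T)" and e2: "w \<circ> transpose a t = v \<circ> transpose (int j) t'"
    using e unfolding xx yy fB_def fC_def t_def t'_def by simp_all
  have J: "int j \<notin> T" "int j > 0" "v (int j) = int j" using j_props[OF j d'] by auto
  have tS: "t \<notin> S" using notin_small[OF d _ at] by simp
  have t'S: "t' \<notin> S" using notin_small[OF d _ at'] by simp
  have jm: "int j \<noteq> t'" using at' j by auto
  have "t' \<in> insert t S" by (metis e1 insertI1 insertI2)
  hence tt: "t' = t" using t'S by auto
  have "(w \<circ> transpose a t) t = w a" by simp
  moreover have "(v \<circ> transpose (int j) t') t = int j" using tt J by simp
  ultimately have waj: "w a = int j" using e2 by simp
  have "int j \<in> insert t S" by (metis e1 insertI1)
  hence jS: "int j \<in> S" using jm tt by auto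
  show False
  proof (cases "int j = a")
    case True thus False using waj dp_der[OF d a] J(2) by simp
  next
    case False
    have "(w \<circ> transpose a t) (int j) = w (int j)" using False jm tt by simp
    moreover have "(v \<circ> transpose (int j) t') (int j) = t'" using permutes_not_in[OF dp_perm[OF d']] notin_small[OF d' _ at'] by simp
    ultimately have "w (int j) = t" using e2 tt by simp
    moreover have "w (int j) \<in> S" using jS permutes_in_image[OF dp_perm[OF d]] by simp
    ultimately show False using tS by simp
  qed
qed

lemma injA: "inj_on (fA m) DA"
proof (rule inj_onI)
  fix x y assume x: "x \<in> DA" and y: "y \<in> DA" and e: "fA m x = fA m y"
  obtain S w where xx: "x = (S,w)" and d: "(S,w) \<in> dp (N - {m})" using DA_D[OF x] by blast
  obtain S' w' where yy: "y = (S',w')" and d': "(S',w') \<in> dp (N - {m})" using DA_D[OF y] by blast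
  have "- int m \<notin> S" "- int m \<notin> S'" using notin_small[OF d, of "- int m"] notin_small[OF d', of "- int m"] by auto
  thus "x = y" using e unfolding xx yy fA_def by (simp add: insert_ident)
qed

lemma injB: "inj_on (fB m) DB"
proof (rule inj_onI)
  fix x y assume x: "x \<in> DB" and y: "y \<in> DB" and e: "fB m x = fB m y"
  obtain S w a s where xx: "x = ((S,w),(a,s))" and d: "(S,w) \<in> dp (N - {m})" and a: "a \<in> S"
    and s: "s \<in> {1,-1}" using DB_D[OF x] by blast
  obtain S' w' a' s' where yy: "y = ((S',w'),(a',s'))" and d': "(S',w') \<in> dp (N - {m})" and a': "a' \<in> S'"
    and s': "s' \<in> {1,-1}" using DB_D[OF y] by blast
  define t where "t = s * int m"
  define t' where "t' = s' * int m"
  have at: "\<bar>t\<bar> = int m" using s unfolding t_def by (rule sm_abs)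
  have at': "\<bar>t'\<bar> = int m" using s' unfolding t'_def by (rule sm_abs)
  have e1: "insert t S = insert t' S'" and e2: "w \<circ> transpose a t = w' \<circ> transpose a' t'"
    using e unfolding xx yy fB_def t_def t'_def by simp_all
  have tS: "t \<notin> S" "t \<notin> S'" using notin_small[OF d _ at] notin_small[OF d' _ at] by auto
  have t'S: "t' \<notin> S'" using notin_small[OF d' _ at'] by simp
  have "t \<in> insert t' S'" by (metis e1 insertI1)
  hence tt: "t = t'" using tS(2) by auto
  hence ss: "s = s'" unfolding t_def t'_def using m_pos by simp
  have SS: "S = S'" using e1 tS tt by (simp add: insert_ident)
  have aa: "a = a'"
  proof (rule ccontr)
    assume na: "a \<noteq> a'"
    have "(w \<circ> transpose a t) a = t" using permutes_not_in[OF dp_perm[OF d] tS(1)] by simp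
    moreover have "(w' \<circ> transpose a' t') a = w' a" using na a tS(1) tt by (auto simp: transpose_def)
    moreover have "w' a \<in> S'" using a SS permutes_in_image[OF dp_perm[OF d']] by simp
    ultimately show False using e2 tS(2) by simp
  qed
  have "w = w'" using arg_cong[OF e2, of "\<lambda>f. f \<circ> transpose a t"] aa tt by (simp add: comp_transpose_twice)
  thus "x = y" unfolding xx yy using SS aa ss by simp
qed

lemma injC: "inj_on (fC m) DC"
proof (rule inj_onI)
  fix x y assume x: "x \<in> DC" and y: "y \<in> DC" and e: "fC m x = fC m y"
  obtain j T v s where xx: "x = (j,((T,v),s))" and j: "j \<in> N - {m}" and d: "(T,v) \<in> dp (N - {m} - {j})"
    and s: "s \<in> {1,-1}" using DC_D[OF x] by blast
  obtain j' T' v' s' where yy: "y = (j',((T',v'),s'))" and j': "j' \<in> N - {m}" and d': "(T',v') \<in> dp (N - {m} - {j'})"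
    and s': "s' \<in> {1,-1}" using DC_D[OF y] by blast
  define t where "t = s * int m"
  define t' where "t' = s' * int m"
  have at: "\<bar>t\<bar> = int m" using s unfolding t_def by (rule sm_abs)
  have at': "\<bar>t'\<bar> = int m" using s' unfolding t'_def by (rule sm_abs)
  have e1: "insert (int j) (insert t T) = insert (int j') (insert t' T')" and e2: "v \<circ> transpose (int j) t = v' \<circ> transpose (int j') t'"
    using e unfolding xx yy fC_def t_def t'_def by simp_all
  have J: "int j \<notin> T" "int j > 0" "v (int j) = int j" using j_props[OF j d] by auto
  have J': "int j' \<notin> T'" "int j' > 0" "v' (int j') = int j'" using j_props[OF j' d'] by auto
  have tT: "t \<notin> T'" "t \<notin> T" using notin_small[OF d' _ at] notin_small[OF d _ at] by auto
  have jt: "int j' \<noteq> t" "int j \<noteq> t" using at j j' by auto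
  have "t \<in> insert (int j') (insert t' T')" by (metis e1 insertI1 insertI2)
  hence tt: "t = t'" using tT(1) jt(1) by auto
  hence ss: "s = s'" unfolding t_def t'_def using m_pos by simp
  have "(v \<circ> transpose (int j) t) t = int j" using J by simp
  moreover have "(v' \<circ> transpose (int j') t') t = int j'" using J' tt by simp
  ultimately have jj: "j = j'" using e2 by simp
  have "insert t T = insert t T'" using e1 J(1) J'(1) jj tt jt by (simp add: insert_ident)
  hence TT: "T = T'" using tT by (simp add: insert_ident)
  have "v = v'" using arg_cong[OF e2, of "\<lambda>f. f \<circ> transpose (int j) t"] jj tt by (simp add: comp_transpose_twice)
  thus "x = y" unfolding xx yy using TT jj ss by simp
qed

lemma finDA: "finite DA" unfolding DA_def using fN by (intro finite_dp) simp

lemma finDB: "finite DB" unfolding DB_def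
proof (rule finite_SigmaI)
  show "finite (dp (N - {m}))" using fN by (intro finite_dp) simp
  fix x assume "x \<in> dp (N - {m})"
  moreover obtain S w where "x = (S,w)" by (cases x)
  ultimately have "finite (fst x)" using dp_finite_S fN by auto
  thus "finite (fst x \<times> {1,-1::int})" by simp
qed

lemma finDC: "finite DC" unfolding DC_def
proof (rule finite_SigmaI)
  show "finite (N - {m})" using fN by simp
  fix j assume "j \<in> N - {m}"
  have "finite (dp (N - {m} - {j}))" using fN by (intro finite_dp) simp
  thus "finite (dp (N - {m} - {j}) \<times> {1,-1::int})" by simp
qed

lemma dpN_eq: "dp N = fA m ` DA \<union> fB m ` DB \<union> fC m ` DC"
proof (rule equalityI)
  show "dp N \<subseteq> fA m ` DA \<union> fB m ` DB \<union> fC m ` DC" using cover by (rule subsetI)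
  show "fA m ` DA \<union> fB m ` DB \<union> fC m ` DC \<subseteq> dp N" using fA_in fB_in fC_in by (auto simp del: Un_iff)
qed

lemma sum_decomp: "(\<Sum>y\<in>dp N. g y) = (\<Sum>x\<in>DA. g (fA m x)) + (\<Sum>x\<in>DB. g (fB m x)) + (\<Sum>x\<in>DC. g (fC m x))"
proof -
  have d1: "(fA m ` DA \<union> fB m ` DB) \<inter> fC m ` DC = {}" using disjAC disjBC by auto
  have "(\<Sum>y\<in>dp N. g y) = sum g (fA m ` DA \<union> fB m ` DB) + sum g (fC m ` DC)"
    unfolding dpN_eq using finDA finDB finDC d1 by (intro sum.union_disjoint) auto
  also have "sum g (fA m ` DA \<union> fB m ` DB) = sum g (fA m ` DA) + sum g (fB m ` DB)"
    using finDA finDB disjAB by (intro sum.union_disjoint) auto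
  also have "sum g (fA m ` DA) = (\<Sum>x\<in>DA. g (fA m x))" using sum.reindex[OF injA] by simp
  also have "sum g (fB m ` DB) = (\<Sum>x\<in>DB. g (fB m x))" using sum.reindex[OF injB] by simp
  also have "sum g (fC m ` DC) = (\<Sum>x\<in>DC. g (fC m x))" using sum.reindex[OF injC] by simp
  finally show ?thesis .
qed

lemma excA: "(S,w) \<in> dp (N - {m}) \<Longrightarrow> excB (insert (- int m) S) w = Suc (excB S w)"
proof -
  assume d: "(S,w) \<in> dp (N - {m})"
  have fS: "finite S" using dp_finite_S[OF d] fN by simp
  have nt: "- int m \<notin> S" using notin_small[OF d, of "- int m"] by simp
  have "w (- int m) = - int m" using permutes_not_in[OF dp_perm[OF d] nt] .
  hence e: "ex w (- int m)" unfolding ex_def using m_pos by simp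
  have fi: "finite (insert (- int m) S)" using fS by simp
  show ?thesis unfolding excB_sum[OF fS] excB_sum[OF fi] using fS nt e by simp
qed

lemma excBB: "(S,w) \<in> dp (N - {m}) \<Longrightarrow> a \<in> S \<Longrightarrow> s \<in> {1,-1} \<Longrightarrow>
   excB (insert (s * int m) S) (w \<circ> transpose a (s * int m)) + (if ex w a then 1 else 0) = excB S w + 1"
proof -
  assume d: "(S,w) \<in> dp (N - {m})" and a: "a \<in> S" and s: "s \<in> {1,-1}"
  define t where "t = s * int m"
  define w2 where "w2 = w \<circ> transpose a t"
  have at: "\<bar>t\<bar> = int m" using s unfolding t_def by (rule sm_abs)
  have fS: "finite S" using dp_finite_S[OF d] fN by simp
  have nt: "t \<notin> S" using notin_small[OF d _ at] by simp
  have wt: "w t = t" using permutes_not_in[OF dp_perm[OF d] nt] .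
  have waS: "w a \<in> S" using a permutes_in_image[OF dp_perm[OF d]] by simp
  have sa: "\<bar>a\<bar> < int m" using small[OF d _ a] by simp
  have swa: "\<bar>w a\<bar> < int m" using small[OF d _ waS] by simp
  have w2a: "w2 a = t" unfolding w2_def using wt by simp
  have w2t: "w2 t = w a" unfolding w2_def by simp
  have tm: "t = int m \<or> t = - int m" using at by arith
  have one: "(if ex w2 t then 1 else 0) + (if ex w2 a then 1 else 0) = (1::nat)"
    unfolding ex_def w2a w2t using tm sa swa by auto
  define F where "F = (\<lambda>f x. if ex f x then 1 else (0::nat))"
  have "(\<Sum>x\<in>S - {a}. F w2 x) = (\<Sum>x\<in>S - {a}. F w x)"
  proof (rule sum.cong)
    fix x assume "x \<in> S - {a}"
    hence "x \<noteq> a" "x \<noteq> t" using nt by auto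
    hence "w2 x = w x" unfolding w2_def by simp
    thus "F w2 x = F w x" unfolding F_def ex_def by simp
  qed simp
  moreover have "(\<Sum>x\<in>insert t S. F w2 x) = F w2 t + F w2 a + (\<Sum>x\<in>S - {a}. F w2 x)"
    using fS nt a by (simp add: sum.remove)
  moreover have "(\<Sum>x\<in>S. F w x) = F w a + (\<Sum>x\<in>S - {a}. F w x)"
    using fS a by (simp add: sum.remove)
  ultimately have "(\<Sum>x\<in>insert t S. F w2 x) + F w a = (\<Sum>x\<in>S. F w x) + 1"
    using one unfolding F_def by simp
  moreover have "finite (insert t S)" using fS by simp
  ultimately show ?thesis unfolding t_def[symmetric] w2_def[symmetric] excB_sum[OF fS]
     excB_sum[OF \<open>finite (insert t S)\<close>] by (simp add: F_def)
qed

lemma excCC: "j \<in> N - {m} \<Longrightarrow> (T,v) \<in> dp (N - {m} - {j}) \<Longrightarrow> s \<in> {1,-1} \<Longrightarrow>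
   excB (insert (int j) (insert (s * int m) T)) (v \<circ> transpose (int j) (s * int m)) = Suc (excB T v)"
proof -
  assume j: "j \<in> N - {m}" and d: "(T,v) \<in> dp (N - {m} - {j})" and s: "s \<in> {1,-1}"
  define t where "t = s * int m"
  define v2 where "v2 = v \<circ> transpose (int j) t"
  have at: "\<bar>t\<bar> = int m" using s unfolding t_def by (rule sm_abs)
  have fT: "finite T" using dp_finite_S[OF d] fN by simp
  have nt: "t \<notin> T" using notin_small[OF d _ at] by auto
  have J: "int j \<notin> T" "int j > 0" "v (int j) = int j" using j_props[OF j d] by auto
  have jt: "int j \<noteq> t" using at j by auto
  have vt: "v t = t" using permutes_not_in[OF dp_perm[OF d] nt] .
  have v2j: "v2 (int j) = t" unfolding v2_def using vt by simp
  have v2t: "v2 t = int j" unfolding v2_def using J by simp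
  define F where "F = (\<lambda>f x. if ex f x then 1 else (0::nat))"
  have one: "F v2 (int j) + F v2 t = 1" unfolding F_def ex_def v2j v2t using jt J(2) by auto
  have "(\<Sum>x\<in>T. F v2 x) = (\<Sum>x\<in>T. F v x)"
  proof (rule sum.cong)
    fix x assume "x \<in> T"
    hence "x \<noteq> int j" "x \<noteq> t" using nt J by auto
    hence "v2 x = v x" unfolding v2_def by simp
    thus "F v2 x = F v x" unfolding F_def ex_def by simp
  qed simp
  moreover have "(\<Sum>x\<in>insert (int j) (insert t T). F v2 x) = F v2 (int j) + F v2 t + (\<Sum>x\<in>T. F v2 x)"
    using fT nt J jt by simp
  ultimately have "(\<Sum>x\<in>insert (int j) (insert t T). F v2 x) = Suc (\<Sum>x\<in>T. F v x)" using one by simp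
  moreover have "finite (insert (int j) (insert t T))" using fT by simp
  ultimately show ?thesis unfolding t_def[symmetric] v2_def[symmetric] excB_sum[OF fT]
     excB_sum[OF \<open>finite (insert (int j) (insert t T))\<close>] by (simp add: F_def)
qed

lemma cf_alt: "cf M k = (\<Sum>(S,w)\<in>dp M. if excB S w = k then 1 else 0)"
  unfolding cf_def by (simp add: split_def)

lemma inner_B: "finite S \<Longrightarrow> (\<Sum>a\<in>S. if excB S w + (if ex w a then 0 else 1) = K then 1 else (0::real))
   = (if excB S w = K then real (excB S w) else 0) + (if excB S w + 1 = K then real (card S - excB S w) else 0)"
proof -
  assume fS: "finite S"
  define E where "E = {a\<in>S. ex w a}"
  have ce: "card E = excB S w" unfolding E_def excB_ex ..
  have ES: "E \<subseteq> S" unfolding E_def by auto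
  let ?f = "\<lambda>a. if excB S w + (if ex w a then 0 else 1) = K then 1 else (0::real)"
  have "sum ?f S = sum ?f (S - E) + sum ?f E" using ES fS by (rule sum.subset_diff)
  also have "sum ?f E = (\<Sum>a\<in>E. if excB S w = K then 1 else 0)"
    by (rule sum.cong) (auto simp: E_def)
  also have "\<dots> = (if excB S w = K then real (excB S w) else 0)" using ce by simp
  also have "sum ?f (S - E) = (\<Sum>a\<in>S - E. if excB S w + 1 = K then 1 else 0)"
    by (rule sum.cong) (auto simp: E_def)
  also have "\<dots> = (if excB S w + 1 = K then real (card S - excB S w) else 0)"
    using ce ES fS by (simp add: card_Diff_subset finite_subset)
  finally show ?thesis by simp
qed

lemma cf_rec: "cf N K = (\<Sum>(S,w)\<in>dp (N - {m}). if Suc (excB S w) = K then 1 else 0)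
   + 2 * (\<Sum>(S,w)\<in>dp (N - {m}). (if excB S w = K then real (excB S w) else 0) + (if excB S w + 1 = K then real (card S - excB S w) else 0))
   + 2 * (\<Sum>j\<in>N - {m}. \<Sum>(T,v)\<in>dp (N - {m} - {j}). if Suc (excB T v) = K then 1 else 0)"
proof -
  define g where "g = (\<lambda>y. if excB (fst y) (snd y) = K then 1 else (0::real))"
  have "cf N K = sum g (dp N)" unfolding cf_def g_def ..
  also have "\<dots> = (\<Sum>x\<in>DA. g (fA m x)) + (\<Sum>x\<in>DB. g (fB m x)) + (\<Sum>x\<in>DC. g (fC m x))"
    by (rule sum_decomp)
  also have "(\<Sum>x\<in>DA. g (fA m x)) = (\<Sum>(S,w)\<in>dp (N - {m}). if Suc (excB S w) = K then 1 else 0)"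
    unfolding DA_def
  proof (rule sum.cong)
    fix x assume x: "x \<in> dp (N - {m})"
    obtain S w where xx: "x = (S,w)" by (cases x)
    show "g (fA m x) = (case x of (S,w) \<Rightarrow> if Suc (excB S w) = K then 1 else 0)"
      unfolding xx g_def fA_def using excA[OF x[unfolded xx]] by simp
  qed simp
  also have "(\<Sum>x\<in>DB. g (fB m x)) = (\<Sum>(S,w)\<in>dp (N - {m}). 2 * ((if excB S w = K then real (excB S w) else 0) + (if excB S w + 1 = K then real (card S - excB S w) else 0)))"
  proof -
    have "(\<Sum>x\<in>DB. g (fB m x)) = (\<Sum>x\<in>dp (N - {m}). \<Sum>y\<in>fst x \<times> {1,-1::int}. g (fB m (x,y)))"
    proof -
      have fx: "\<forall>x\<in>dp (N - {m}). finite (fst x \<times> {1,-1::int})"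
      proof
        fix x assume "x \<in> dp (N - {m})"
        moreover obtain S w where "x = (S,w)" by (cases x)
        ultimately have "finite (fst x)" using dp_finite_S fN by auto
        thus "finite (fst x \<times> {1,-1::int})" by simp
      qed
      have f0: "finite (dp (N - {m}))" using fN by (intro finite_dp) simp
      show ?thesis unfolding DB_def using sum.Sigma[OF f0 fx, of "\<lambda>x y. g (fB m (x,y))"] by (simp add: split_def)
    qed
    also have "\<dots> = (\<Sum>(S,w)\<in>dp (N - {m}). 2 * ((if excB S w = K then real (excB S w) else 0) + (if excB S w + 1 = K then real (card S - excB S w) else 0)))"
    proof (rule sum.cong)
      fix x assume x: "x \<in> dp (N - {m})"
      obtain S w where xx: "x = (S,w)" by (cases x)
      have d: "(S,w) \<in> dp (N - {m})" using x xx by simp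
      have fS: "finite S" using dp_finite_S[OF d] fN by simp
      have "(\<Sum>y\<in>S \<times> {1,-1::int}. g (fB m ((S,w),y))) = (\<Sum>y\<in>S \<times> {1,-1::int}. if excB S w + (if ex w (fst y) then 0 else 1) = K then 1 else (0::real))"
      proof (rule sum.cong)
        fix y assume y: "y \<in> S \<times> {1,-1::int}"
        obtain a s where yy: "y = (a,s)" by (cases y)
        have e: "excB (insert (s * int m) S) (w \<circ> transpose a (s * int m)) + (if ex w a then 1 else 0) = excB S w + 1"
          using excBB[OF d] y yy by simp
        hence "excB (insert (s * int m) S) (w \<circ> transpose a (s * int m)) = excB S w + (if ex w a then 0 else 1)"
          by (auto split: if_splits)
        thus "g (fB m ((S,w),y)) = (if excB S w + (if ex w (fst y) then 0 else 1) = K then 1 else 0)"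
          unfolding yy g_def fB_def by simp
      qed simp
      also have "\<dots> = (\<Sum>a\<in>S. \<Sum>s\<in>{1,-1::int}. if excB S w + (if ex w a then 0 else 1) = K then 1 else (0::real))"
        by (subst sum.cartesian_product) (simp add: split_def)
      also have "\<dots> = 2 * (\<Sum>a\<in>S. if excB S w + (if ex w a then 0 else 1) = K then 1 else (0::real))"
        by (simp add: sum_distrib_left)
      also have "\<dots> = 2 * ((if excB S w = K then real (excB S w) else 0) + (if excB S w + 1 = K then real (card S - excB S w) else 0))"
        using inner_B[OF fS] by simp
      finally show "(\<Sum>y\<in>fst x \<times> {1,-1::int}. g (fB m (x,y))) = (case x of (S,w) \<Rightarrow> 2 * ((if excB S w = K then real (excB S w) else 0) + (if excB S w + 1 = K then real (card S - excB S w) else 0)))"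
        unfolding xx by simp
    qed simp
    finally show ?thesis .
  qed
  also have "(\<Sum>x\<in>DC. g (fC m x)) = (\<Sum>j\<in>N - {m}. 2 * (\<Sum>(T,v)\<in>dp (N - {m} - {j}). if Suc (excB T v) = K then 1 else 0))"
  proof -
    have "(\<Sum>x\<in>DC. g (fC m x)) = (\<Sum>j\<in>N - {m}. \<Sum>y\<in>dp (N - {m} - {j}) \<times> {1,-1::int}. g (fC m (j,y)))"
    proof -
      have fx: "\<forall>j\<in>N - {m}. finite (dp (N - {m} - {j}) \<times> {1,-1::int})"
        using fN by (auto intro: finite_dp)
      have f0: "finite (N - {m})" using fN by simp
      show ?thesis unfolding DC_def using sum.Sigma[OF f0 fx, of "\<lambda>x y. g (fC m (x,y))"] by (simp add: split_def)
    qed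
    also have "\<dots> = (\<Sum>j\<in>N - {m}. 2 * (\<Sum>(T,v)\<in>dp (N - {m} - {j}). if Suc (excB T v) = K then 1 else 0))"
    proof (rule sum.cong)
      fix j assume j: "j \<in> N - {m}"
      have fD: "finite (dp (N - {m} - {j}))" using fN by (intro finite_dp) simp
      have "(\<Sum>y\<in>dp (N - {m} - {j}) \<times> {1,-1::int}. g (fC m (j,y))) = (\<Sum>y\<in>dp (N - {m} - {j}) \<times> {1,-1::int}. if Suc (excB (fst (fst y)) (snd (fst y))) = K then 1 else (0::real))"
      proof (rule sum.cong)
        fix y assume y: "y \<in> dp (N - {m} - {j}) \<times> {1,-1::int}"
        obtain T v s where yy: "y = ((T,v),s)" by (cases y) auto
        have "excB (insert (int j) (insert (s * int m) T)) (v \<circ> transpose (int j) (s * int m)) = Suc (excB T v)"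
          using excCC[OF j] y yy by simp
        thus "g (fC m (j,y)) = (if Suc (excB (fst (fst y)) (snd (fst y))) = K then 1 else 0)"
          unfolding yy g_def fC_def by simp
      qed simp
      also have "\<dots> = (\<Sum>x\<in>dp (N - {m} - {j}). \<Sum>s\<in>{1,-1::int}. if Suc (excB (fst x) (snd x)) = K then 1 else (0::real))"
        by (subst sum.cartesian_product) (simp add: split_def)
      also have "\<dots> = 2 * (\<Sum>(T,v)\<in>dp (N - {m} - {j}). if Suc (excB T v) = K then 1 else 0)"
        by (simp add: sum_distrib_left split_def)
      finally show "(\<Sum>y\<in>dp (N - {m} - {j}) \<times> {1,-1::int}. g (fC m (j,y))) = 2 * (\<Sum>(T,v)\<in>dp (N - {m} - {j}). if Suc (excB T v) = K then 1 else 0)" .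
    qed simp
    finally show ?thesis .
  qed
  finally show ?thesis by (simp add: sum_distrib_left split_def)
qed

lemma cf_zero: "cf N 0 = 0"
proof -
  have "cf N 0 = (\<Sum>(S,w)\<in>dp (N - {m}). if Suc (excB S w) = 0 then 1 else 0)
   + 2 * (\<Sum>(S,w)\<in>dp (N - {m}). (if excB S w = 0 then real (excB S w) else 0) + (if excB S w + 1 = 0 then real (card S - excB S w) else 0))
   + 2 * (\<Sum>j\<in>N - {m}. \<Sum>(T,v)\<in>dp (N - {m} - {j}). if Suc (excB T v) = 0 then 1 else 0)"
    by (rule cf_rec)
  also have "\<dots> = 0"
    by (simp add: split_def) (intro sum.neutral ballI, simp)
  finally show ?thesis .
qed

lemma cf_suc: "cf N (Suc k) = cf (N - {m}) k + 2 * (real (Suc k) * cf (N - {m}) (Suc k) + real (card (N - {m}) - k) * cf (N - {m}) k)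
   + 2 * (\<Sum>j\<in>N - {m}. cf (N - {m} - {j}) k)"
proof -
  have "cf N (Suc k) = (\<Sum>(S,w)\<in>dp (N - {m}). if Suc (excB S w) = Suc k then 1 else 0)
   + 2 * (\<Sum>(S,w)\<in>dp (N - {m}). (if excB S w = Suc k then real (excB S w) else 0) + (if excB S w + 1 = Suc k then real (card S - excB S w) else 0))
   + 2 * (\<Sum>j\<in>N - {m}. \<Sum>(T,v)\<in>dp (N - {m} - {j}). if Suc (excB T v) = Suc k then 1 else 0)"
    by (rule cf_rec)
  also have "(\<Sum>(S,w)\<in>dp (N - {m}). if Suc (excB S w) = Suc k then 1 else 0) = cf (N - {m}) k"
    unfolding cf_alt by simp
  also have "(\<Sum>j\<in>N - {m}. \<Sum>(T,v)\<in>dp (N - {m} - {j}). if Suc (excB T v) = Suc k then 1 else 0) = (\<Sum>j\<in>N - {m}. cf (N - {m} - {j}) k)"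
    unfolding cf_alt by simp
  also have "(\<Sum>(S,w)\<in>dp (N - {m}). (if excB S w = Suc k then real (excB S w) else 0) + (if excB S w + 1 = Suc k then real (card S - excB S w) else 0))
     = (\<Sum>(S,w)\<in>dp (N - {m}). real (Suc k) * (if excB S w = Suc k then 1 else 0) + real (card (N - {m}) - k) * (if excB S w = k then 1 else 0))"
  proof (rule sum.cong)
    fix x assume x: "x \<in> dp (N - {m})"
    obtain S w where xx: "x = (S,w)" by (cases x)
    have "card S = card (N - {m})" using dp_card x xx by blast
    thus "(case x of (S,w) \<Rightarrow> (if excB S w = Suc k then real (excB S w) else 0) + (if excB S w + 1 = Suc k then real (card S - excB S w) else 0))
       = (case x of (S,w) \<Rightarrow> real (Suc k) * (if excB S w = Suc k then 1 else 0) + real (card (N - {m}) - k) * (if excB S w = k then 1 else 0))"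
      unfolding xx by simp
  qed simp
  also have "\<dots> = real (Suc k) * cf (N - {m}) (Suc k) + real (card (N - {m}) - k) * cf (N - {m}) k"
    unfolding cf_alt by (simp add: split_def sum.distrib sum_distrib_left)
  finally show ?thesis .
qed

end

lemma cf_card: "finite N \<Longrightarrow> 0 \<notin> N \<Longrightarrow> cf N k = cf {1..card N} k"
proof (induction "card N" arbitrary: N k rule: less_induct)
  case less
  show ?case
  proof (cases "N = {}")
    case True thus ?thesis by simp
  next
    case False
    define n where "n = card N"
    have n0: "n > 0" unfolding n_def using False less.prems by auto
    define m where "m = Max N"
    have mN: "m \<in> N" and mx: "\<forall>i\<in>N. i \<le> m" unfolding m_def using False less.prems by auto
    define M where "M = {1..n}"
    have fM: "finite M" and zM: "0 \<notin> M" and nM: "n \<in> M" and mxM: "\<forall>i\<in>M. i \<le> n" unfolding M_def using n0 by auto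
    have cM: "card M = n" unfolding M_def by simp
    have cN': "card (N - {m}) = n - 1" unfolding n_def using mN less.prems by simp
    have cM': "card (M - {n}) = n - 1" using nM cM fM by simp
    have IH: "\<And>A k. finite A \<Longrightarrow> 0 \<notin> A \<Longrightarrow> card A < n \<Longrightarrow> cf A k = cf {1..card A} k"
      using less.hyps unfolding n_def by blast
    have e1: "\<And>k. cf (N - {m}) k = cf (M - {n}) k"
    proof -
      fix k
      have "cf (N - {m}) k = cf {1..n-1} k" using IH[of "N - {m}" k] less.prems cN' n0 by simp
      also have "\<dots> = cf (M - {n}) k" using IH[of "M - {n}" k] fM zM cM' n0 by simp
      finally show "cf (N - {m}) k = cf (M - {n}) k" .
    qed
    have e2: "\<And>k. (\<Sum>j\<in>N - {m}. cf (N - {m} - {j}) k) = (\<Sum>j\<in>M - {n}. cf (M - {n} - {j}) k)"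
    proof -
      fix k
      have "(\<Sum>j\<in>N - {m}. cf (N - {m} - {j}) k) = (\<Sum>j\<in>N - {m}. cf {1..n-2} k)"
      proof (rule sum.cong)
        fix j assume j: "j \<in> N - {m}"
        have "card (N - {m} - {j}) = n - 2" using cN' j less.prems by simp
        thus "cf (N - {m} - {j}) k = cf {1..n-2} k" using IH[of "N - {m} - {j}" k] less.prems n0 by simp
      qed simp
      also have "\<dots> = (\<Sum>j\<in>M - {n}. cf {1..n-2} k)" using cN' cM' by simp
      also have "\<dots> = (\<Sum>j\<in>M - {n}. cf (M - {n} - {j}) k)"
      proof (rule sum.cong)
        fix j assume j: "j \<in> M - {n}"
        have "card (M - {n} - {j}) = n - 2" using cM' j fM by simp
        thus "cf {1..n-2} k = cf (M - {n} - {j}) k" using IH[of "M - {n} - {j}" k] fM zM n0 by simp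
      qed simp
      finally show "(\<Sum>j\<in>N - {m}. cf (N - {m} - {j}) k) = (\<Sum>j\<in>M - {n}. cf (M - {n} - {j}) k)" .
    qed
    show ?thesis
    proof (cases k)
      case 0
      thus ?thesis using cf_zero[OF less.prems mN mx] cf_zero[OF fM zM nM mxM] unfolding M_def n_def by simp
    next
      case (Suc k')
      show ?thesis unfolding Suc cf_suc[OF less.prems mN mx] using cf_suc[OF fM zM nM mxM, of k']
        unfolding M_def[symmetric] n_def[symmetric] e1 e2 cN' cM' by simp
    qed
  qed
qed

definition d :: "nat \<Rightarrow> nat \<Rightarrow> real" where "d n k = cf {1..n} k"

lemma d_0: "d 0 k = (if k = 0 then 1 else 0)"
  unfolding d_def using cf_empty by simp


lemma d_zero: "n > 0 \<Longrightarrow> d n 0 = 0"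
  unfolding d_def by (rule cf_zero[where N="{1..n}" and m=n]) auto

lemma d_big: "k > n \<Longrightarrow> d n k = 0"
  unfolding d_def by (rule cf_big) auto

lemma d_suc0: "n > 0 \<Longrightarrow> d n (Suc k) = d (n-1) k + 2 * (real (Suc k) * d (n-1) (Suc k) + real (n - 1 - k) * d (n-1) k)
   + 2 * real (n - 1) * d (n-2) k"
proof -
  assume n: "n > 0"
  have e: "{1..n} - {n} = {1..n-1}" using n by auto
  have "(\<Sum>j\<in>{1..n-1}. cf ({1..n-1} - {j}) k) = (\<Sum>j\<in>{1..n-1}. d (n-2) k)"
  proof (rule sum.cong)
    fix j assume j: "j \<in> {1..n-1}"
    have "cf ({1..n-1} - {j}) k = cf {1..card ({1..n-1} - {j})} k" by (rule cf_card) auto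
    also have "card ({1..n-1} - {j}) = n - 2" using j by simp
    finally show "cf ({1..n-1} - {j}) k = d (n-2) k" unfolding d_def .
  qed simp
  hence "(\<Sum>j\<in>{1..n-1}. cf ({1..n-1} - {j}) k) = real (n - 1) * d (n-2) k" by simp
  moreover have "cf {1..n} (Suc k) = cf ({1..n} - {n}) k + 2 * (real (Suc k) * cf ({1..n} - {n}) (Suc k) + real (card ({1..n} - {n}) - k) * cf ({1..n} - {n}) k)
   + 2 * (\<Sum>j\<in>{1..n} - {n}. cf ({1..n} - {n} - {j}) k)"
    by (rule cf_suc) (use n in auto)
  ultimately show ?thesis unfolding d_def e by simp
qed

lemma d_suc: "n > 0 \<Longrightarrow> d n (Suc k) = 2 * real (Suc k) * d (n-1) (Suc k) + (2 * real n - 2 * real k - 1) * d (n-1) k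
   + 2 * real (n - 1) * d (n-2) k"
proof -
  assume n: "n > 0"
  have "real (n - 1 - k) * d (n-1) k = (real n - 1 - real k) * d (n-1) k"
  proof (cases "k \<le> n - 1")
    case True thus ?thesis using n by (simp add: of_nat_diff)
  next
    case False thus ?thesis using d_big[of "n-1" k] by simp
  qed
  thus ?thesis using d_suc0[OF n, of k] by (simp add: algebra_simps)
qed

lemma coeff_dB: "coeff (dB n) k = d n k"
  unfolding dB_def d_def cf_def derangementsB_eq coeff_sum by (simp add: split_def)

fun Pc :: "nat \<Rightarrow> nat \<Rightarrow> real" where
  "Pc 0 k = (if k = 0 then 1 else 0)"
| "Pc (Suc 0) k = 0"
| "Pc (Suc (Suc n)) k = (if k = 0 then 0 else (2 * real k - 1) * Pc (Suc n) k
     + 2 * (real (Suc (Suc n)) - real k) * Pc (Suc n) (k - 1)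
     + 2 * (real (Suc (Suc n)) - 1) * Pc n (k - 1) + d (Suc n) k)"

fun Mc :: "nat \<Rightarrow> nat \<Rightarrow> real" where
  "Mc 0 k = 0"
| "Mc (Suc 0) k = (if k = 1 then 1 else 0)"
| "Mc (Suc (Suc n)) k = (if k = 0 then 0 else (2 * real k - 1) * Mc (Suc n) k
     + 2 * (real (Suc (Suc n)) - real k) * Mc (Suc n) (k - 1)
     + 2 * (real (Suc (Suc n)) - 1) * Mc n (k - 1) + d (Suc n) (k - 1))"

lemma Mc_0: "Mc n 0 = 0"
  by (cases n; cases "n - 1") auto

definition inv :: "nat \<Rightarrow> bool" where
  "inv n \<longleftrightarrow> (\<forall>k. Pc n k + Mc n k = d n k) \<and> (\<forall>k. n < k \<longrightarrow> Pc n k = 0) \<and> (\<forall>k\<le>n. Pc n k = Pc n (n - k))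
     \<and> (\<forall>k. Suc n < k \<longrightarrow> Mc n k = 0) \<and> (\<forall>k\<le>Suc n. Mc n k = Mc n (Suc n - k))"

lemma inv_0: "inv 0"
  unfolding inv_def by (auto simp: d_0)

lemma d_1: "d (Suc 0) k = (if k = 1 then 1 else 0)"
proof (cases k)
  case 0 thus ?thesis using d_zero[of 1] by simp
next
  case (Suc k') thus ?thesis using d_suc[of 1 k'] d_0 by auto
qed

lemma inv_1: "inv 1"
proof -
  have a: "\<forall>k\<le>Suc (Suc 0). Mc (Suc 0) k = Mc (Suc 0) (Suc (Suc 0) - k)"
  proof (intro allI impI)
    fix k :: nat assume "k \<le> Suc (Suc 0)"
    hence "k = 0 \<or> k = 1 \<or> k = 2" by arith
    thus "Mc (Suc 0) k = Mc (Suc 0) (Suc (Suc 0) - k)" by auto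
  qed
  have b: "\<forall>k\<le>Suc 0. Pc (Suc 0) k = Pc (Suc 0) (Suc 0 - k)" by simp
  have c: "\<forall>k. Pc (Suc 0) k + Mc (Suc 0) k = d (Suc 0) k" by (simp add: d_1)
  have e: "\<forall>k. Suc (Suc 0) < k \<longrightarrow> Mc (Suc 0) k = 0" by simp
  have b2: "\<forall>k. Suc 0 < k \<longrightarrow> Pc (Suc 0) k = 0" by simp
  show ?thesis unfolding inv_def One_nat_def using a b c e b2 by (intro conjI)
qed

lemma sym_use: "(\<And>k. k \<le> D \<Longrightarrow> f k = f (D - k)) \<Longrightarrow> i \<le> D \<Longrightarrow> D - i = j \<Longrightarrow> f j = f i"
  by metis

lemma inv_step:
  assumes IB: "inv n" and IA: "inv (Suc n)"
  shows "inv (Suc (Suc n))"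
proof -
  let ?N = "Suc (Suc n)"
  define A where "A = Pc (Suc n)"
  define C where "C = Mc (Suc n)"
  define B where "B = Pc n"
  define E where "E = Mc n"
  define D where "D = d (Suc n)"
  note IA' = IA[unfolded inv_def]
  note IB' = IB[unfolded inv_def]
  have AC: "\<And>k. A k + C k = D k" unfolding A_def C_def D_def using IA' by blast
  have Ab: "\<And>k. Suc n < k \<Longrightarrow> A k = 0" unfolding A_def using IA' by blast
  have As: "\<And>k. k \<le> Suc n \<Longrightarrow> A k = A (Suc n - k)" unfolding A_def using IA' by blast
  have Cb: "\<And>k. Suc (Suc n) < k \<Longrightarrow> C k = 0" unfolding C_def using IA' by blast
  have Cs: "\<And>k. k \<le> Suc (Suc n) \<Longrightarrow> C k = C (Suc (Suc n) - k)" unfolding C_def using IA' by blast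
  have BE: "\<And>k. B k + E k = d n k" unfolding B_def E_def using IB' by blast
  have Bb: "\<And>k. n < k \<Longrightarrow> B k = 0" unfolding B_def using IB' by blast
  have Bs: "\<And>k. k \<le> n \<Longrightarrow> B k = B (n - k)" unfolding B_def using IB' by blast
  have Eb: "\<And>k. Suc n < k \<Longrightarrow> E k = 0" unfolding E_def using IB' by blast
  have Es: "\<And>k. k \<le> Suc n \<Longrightarrow> E k = E (Suc n - k)" unfolding E_def using IB' by blast
  have Db: "\<And>k. Suc n < k \<Longrightarrow> D k = 0" unfolding D_def using d_big by simp
  have C0: "C 0 = 0" unfolding C_def by (rule Mc_0)
  have P: "\<And>k. k > 0 \<Longrightarrow> Pc ?N k = (2 * real k - 1) * A k + 2 * (real ?N - real k) * A (k - 1)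
     + 2 * (real ?N - 1) * B (k - 1) + D k"
    unfolding A_def B_def D_def by simp
  have M: "\<And>k. k > 0 \<Longrightarrow> Mc ?N k = (2 * real k - 1) * C k + 2 * (real ?N - real k) * C (k - 1)
     + 2 * (real ?N - 1) * E (k - 1) + D (k - 1)"
    unfolding C_def E_def D_def by simp
  have I1: "\<forall>k. Pc ?N k + Mc ?N k = d ?N k"
  proof
    fix k show "Pc ?N k + Mc ?N k = d ?N k"
    proof (cases k)
      case 0 thus ?thesis using d_zero[of ?N] by simp
    next
      case (Suc k')
      have "d ?N k = 2 * real k * D k + (2 * real ?N - 2 * real k' - 1) * D k' + 2 * real (Suc n) * d n k'"
        unfolding Suc D_def using d_suc[of ?N k'] by simp
      moreover have "Pc ?N k + Mc ?N k = (2 * real k - 1) * (A k + C k) + 2 * (real ?N - real k) * (A k' + C k')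
          + 2 * (real ?N - 1) * (B k' + E k') + D k + D k'"
        using P[of k] M[of k] unfolding Suc by (simp add: algebra_simps)
      moreover have "A k + C k = D k" "A k' + C k' = D k'" "B k' + E k' = d n k'" using AC BE by blast+
      ultimately show ?thesis unfolding Suc by (simp add: algebra_simps)
    qed
  qed
  have I2: "\<forall>k. ?N < k \<longrightarrow> Pc ?N k = 0"
  proof (intro allI impI)
    fix k assume k: "?N < k"
    thus "Pc ?N k = 0" using P[of k] Ab[of k] Ab[of "k-1"] Bb[of "k-1"] Db[of k] by simp
  qed
  have PN: "Pc ?N ?N = 0" using P[of ?N] Ab[of ?N] Bb[of "Suc n"] Db[of ?N] by simp
  have I3: "\<forall>k\<le>?N. Pc ?N k = Pc ?N (?N - k)"
  proof (intro allI impI)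
    fix k assume k: "k \<le> ?N"
    consider "k = 0" | "k = ?N" | "0 < k \<and> k < ?N" using k by linarith
    thus "Pc ?N k = Pc ?N (?N - k)"
    proof cases
      case 1 thus ?thesis using PN by simp
    next
      case 2 thus ?thesis using PN by simp
    next
      case 3
      define k' where "k' = ?N - k"
      have k'p: "k' > 0" "k' < ?N" and kk: "k = ?N - k'" unfolding k'_def using 3 by auto
      have r: "real k' = real ?N - real k" unfolding k'_def using 3 by (simp add: of_nat_diff)
      have a1: "A k' = A (k - 1)" using 3 unfolding k'_def by (intro sym_use[where f=A and D="Suc n", OF As]) arith+
      have a2: "A (k' - 1) = A k" using 3 unfolding k'_def by (intro sym_use[where f=A and D="Suc n", OF As]) arith+
      have b1: "B (k' - 1) = B (k - 1)" using 3 unfolding k'_def by (intro sym_use[where f=B and D="n", OF Bs]) arith+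
      have c1: "C k' = C k" using 3 unfolding k'_def by (intro sym_use[where f=C and D="Suc (Suc n)", OF Cs]) arith+
      have d1: "D k' = A (k - 1) + C k" using AC[of k'] a1 c1 by simp
      have L: "Pc ?N k = (2 * real k - 1) * A k + 2 * (real ?N - real k) * A (k - 1) + 2 * (real ?N - 1) * B (k - 1) + D k"
        using P[of k] 3 by simp
      have R: "Pc ?N k' = (2 * real k' - 1) * A k' + 2 * (real ?N - real k') * A (k' - 1) + 2 * (real ?N - 1) * B (k' - 1) + D k'"
        using P[of k'] k'p by simp
      have Dk: "D k = A k + C k" using AC[of k] by simp
      show ?thesis unfolding k'_def[symmetric] L R a1 a2 b1 d1 r Dk
        by (simp del: Pc.simps Mc.simps add: algebra_simps)
    qed
  qed
  have I4: "\<forall>k. Suc ?N < k \<longrightarrow> Mc ?N k = 0"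
  proof (intro allI impI)
    fix k assume k: "Suc ?N < k"
    thus "Mc ?N k = 0" using M[of k] Cb[of k] Cb[of "k-1"] Eb[of "k-1"] Db[of "k-1"] by simp
  qed
  have MN: "Mc ?N (Suc ?N) = 0"
  proof -
    have "C ?N = 0" using Cs[of ?N] C0 by simp
    thus ?thesis using M[of "Suc ?N"] Cb[of "Suc ?N"] Eb[of ?N] Db[of ?N] by simp
  qed
  have I5: "\<forall>k\<le>Suc ?N. Mc ?N k = Mc ?N (Suc ?N - k)"
  proof (intro allI impI)
    fix k assume k: "k \<le> Suc ?N"
    consider "k = 0" | "k = Suc ?N" | "0 < k \<and> k < Suc ?N" using k by linarith
    thus "Mc ?N k = Mc ?N (Suc ?N - k)"
    proof cases
      case 1 thus ?thesis using MN by simp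
    next
      case 2 thus ?thesis using MN by simp
    next
      case 3
      define k' where "k' = Suc ?N - k"
      have k'p: "k' > 0" "k' < Suc ?N" unfolding k'_def using 3 by auto
      have r: "real k' = real ?N + 1 - real k" unfolding k'_def using 3 by (simp add: of_nat_diff)
      have c1: "C k' = C (k - 1)" using 3 unfolding k'_def by (intro sym_use[where f=C and D="Suc (Suc n)", OF Cs]) arith+
      have c2: "C (k' - 1) = C k" using 3 unfolding k'_def by (intro sym_use[where f=C and D="Suc (Suc n)", OF Cs]) arith+
      have e1: "E (k' - 1) = E (k - 1)" using 3 unfolding k'_def by (intro sym_use[where f=E and D="Suc n", OF Es]) arith+
      have a1: "A (k' - 1) = A (k - 1)" using 3 unfolding k'_def by (intro sym_use[where f=A and D="Suc n", OF As]) arith+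
      have d1: "D (k' - 1) = A (k - 1) + C k" using AC[of "k' - 1"] a1 c2 by simp
      have L: "Mc ?N k = (2 * real k - 1) * C k + 2 * (real ?N - real k) * C (k - 1) + 2 * (real ?N - 1) * E (k - 1) + D (k - 1)"
        using M[of k] 3 by simp
      have R: "Mc ?N k' = (2 * real k' - 1) * C k' + 2 * (real ?N - real k') * C (k' - 1) + 2 * (real ?N - 1) * E (k' - 1) + D (k' - 1)"
        using M[of k'] k'p by simp
      have Dk: "D (k - 1) = A (k - 1) + C (k - 1)" using AC[of "k - 1"] by simp
      show ?thesis unfolding k'_def[symmetric] L R c1 c2 e1 d1 r Dk
        by (simp del: Pc.simps Mc.simps add: algebra_simps)
    qed
  qed
  show ?thesis unfolding inv_def using I1 I2 I3 I4 I5 by blast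
qed

lemma inv_all: "inv n"
proof -
  have "inv n \<and> inv (Suc n)"
    by (induction n) (use inv_0 inv_1 inv_step in auto)
  thus ?thesis by simp
qed

lemma inv_P_sym: "k \<le> n \<Longrightarrow> Pc n k = Pc n (n - k)" using inv_all[of n] unfolding inv_def by blast
lemma inv_P_big: "n < k \<Longrightarrow> Pc n k = 0" using inv_all[of n] unfolding inv_def by blast
lemma inv_M_sym: "k \<le> Suc n \<Longrightarrow> Mc n k = Mc n (Suc n - k)" using inv_all[of n] unfolding inv_def by blast
lemma inv_M_big: "Suc n < k \<Longrightarrow> Mc n k = 0" using inv_all[of n] unfolding inv_def by blast
lemma inv_PM: "Pc n k + Mc n k = d n k" using inv_all[of n] unfolding inv_def by blast

definition pP :: "nat \<Rightarrow> real poly" where "pP n = (\<Sum>i\<in>{0..n}. monom (Pc n i) i)"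
definition pM :: "nat \<Rightarrow> real poly" where "pM n = (\<Sum>i\<in>{0..Suc n}. monom (Mc n i) i)"

lemma coeff_pP: "coeff (pP n) k = Pc n k"
proof -
  have "coeff (pP n) k = (\<Sum>i\<in>{0..n}. if i = k then Pc n i else 0)" unfolding pP_def coeff_sum by simp
  also have "\<dots> = (if k \<in> {0..n} then Pc n k else 0)" by (rule sum.delta) simp
  also have "\<dots> = Pc n k" using inv_P_big[of n k] by auto
  finally show ?thesis .
qed

lemma coeff_pM: "coeff (pM n) k = Mc n k"
proof -
  have "coeff (pM n) k = (\<Sum>i\<in>{0..Suc n}. if i = k then Mc n i else 0)" unfolding pM_def coeff_sum by simp
  also have "\<dots> = (if k \<in> {0..Suc n} then Mc n k else 0)" by (rule sum.delta) simp
  also have "\<dots> = Mc n k" using inv_M_big[of n k] by auto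
  finally show ?thesis .
qed

lemma pal:
  fixes c :: "nat \<Rightarrow> real"
  assumes sym: "\<And>i. i \<le> D \<Longrightarrow> c i = c (D - i)" and x: "x \<noteq> 0"
  shows "poly (\<Sum>i\<in>{0..D}. monom (c i) i) x = x ^ D * poly (\<Sum>i\<in>{0..D}. monom (c i) i) (1 / x)"
proof -
  have "x ^ D * poly (\<Sum>i\<in>{0..D}. monom (c i) i) (1 / x) = (\<Sum>i\<in>{0..D}. c i * (x ^ D * (1 / x) ^ i))"
    unfolding poly_sum poly_monom sum_distrib_left by (simp add: algebra_simps)
  also have "\<dots> = (\<Sum>i\<in>{0..D}. c i * x ^ (D - i))"
  proof (rule sum.cong)
    fix i assume "i \<in> {0..D}"
    hence "x ^ D = x ^ (D - i) * x ^ i" by (simp add: power_add[symmetric])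
    thus "c i * (x ^ D * (1 / x) ^ i) = c i * x ^ (D - i)" using x by (simp add: power_one_over)
  qed simp
  also have "\<dots> = (\<Sum>i\<in>{0..D}. c (D + 0 - i) * x ^ (D - (D + 0 - i)))"
    by (rule sum.atLeastAtMost_rev)
  also have "\<dots> = (\<Sum>i\<in>{0..D}. c i * x ^ i)"
  proof (rule sum.cong)
    fix i assume i: "i \<in> {0..D}"
    hence "D - (D + 0 - i) = i" by simp
    moreover have "c (D + 0 - i) = c i" using sym[of i] i by simp
    ultimately show "c (D + 0 - i) * x ^ (D - (D + 0 - i)) = c i * x ^ i" by simp
  qed simp
  also have "\<dots> = poly (\<Sum>i\<in>{0..D}. monom (c i) i) x" unfolding poly_sum poly_monom ..
  finally show ?thesis ..
qed

lemma uniq: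
  fixes r :: "real poly"
  assumes a: "\<forall>x. x \<noteq> 0 \<longrightarrow> poly r x = x ^ D * poly r (1 / x)"
    and b: "\<forall>x. x \<noteq> 0 \<longrightarrow> poly r x = x ^ (D + 1) * poly r (1 / x)"
  shows "r = 0"
proof (rule ccontr)
  assume r: "r \<noteq> 0"
  have "UNIV - {0,1} \<subseteq> {y. poly r y = 0}"
  proof
    fix y :: real assume "y \<in> UNIV - {0,1}"
    hence y0: "y \<noteq> 0" and y1: "y \<noteq> 1" by auto
    define x where "x = 1 / y"
    have x0: "x \<noteq> 0" and x1: "x \<noteq> 1" unfolding x_def using y0 y1 by auto
    have xy: "1 / x = y" unfolding x_def by simp
    have "x ^ D * poly r y = x ^ D * x * poly r y" using a[rule_format, OF x0] b[rule_format, OF x0] xy by simp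
    hence "x ^ D * (1 - x) * poly r y = 0" by (simp add: algebra_simps)
    hence "poly r y = 0" using x0 x1 by simp
    thus "y \<in> {y. poly r y = 0}" by simp
  qed
  moreover have "finite {y. poly r y = 0}" using r by (rule poly_roots_finite)
  ultimately have "finite (UNIV - {0,1::real})" by (rule finite_subset)
  moreover have "infinite (UNIV :: real set)" by (rule infinite_UNIV_char_0)
  ultimately show False by simp
qed

lemma palP_pP: "\<forall>x::real. x \<noteq> 0 \<longrightarrow> poly (pP n) x = x ^ n * poly (pP n) (1 / x)"
  unfolding pP_def
proof (intro allI impI)
  fix x :: real assume x: "x \<noteq> 0"
  show "poly (\<Sum>i\<in>{0..n}. monom (Pc n i) i) x = x ^ n * poly (\<Sum>i\<in>{0..n}. monom (Pc n i) i) (1 / x)"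
    by (rule pal[where c="Pc n" and D=n, OF inv_P_sym x])
qed

lemma palM_pM: "\<forall>x::real. x \<noteq> 0 \<longrightarrow> poly (pM n) x = x ^ (n + 1) * poly (pM n) (1 / x)"
  unfolding pM_def
proof (intro allI impI)
  fix x :: real assume x: "x \<noteq> 0"
  have "poly (\<Sum>i\<in>{0..Suc n}. monom (Mc n i) i) x = x ^ Suc n * poly (\<Sum>i\<in>{0..Suc n}. monom (Mc n i) i) (1 / x)"
    by (rule pal[where c="Mc n" and D="Suc n", OF inv_M_sym x])
  thus "poly (\<Sum>i\<in>{0..Suc n}. monom (Mc n i) i) x = x ^ (n + 1) * poly (\<Sum>i\<in>{0..Suc n}. monom (Mc n i) i) (1 / x)"
    by simp
qed

lemma dB_split: "dB n = pP n + pM n"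
proof (rule poly_eqI)
  fix k
  have "coeff (dB n) k = d n k" by (rule coeff_dB)
  also have "\<dots> = Pc n k + Mc n k" by (rule inv_PM[symmetric])
  also have "\<dots> = coeff (pP n + pM n) k" by (simp only: coeff_add coeff_pP coeff_pM)
  finally show "coeff (dB n) k = coeff (pP n + pM n) k" .
qed

lemma pal_diff:
  fixes p q :: "real poly"
  assumes "\<forall>x. x \<noteq> 0 \<longrightarrow> poly p x = x ^ D * poly p (1 / x)" "\<forall>x. x \<noteq> 0 \<longrightarrow> poly q x = x ^ D * poly q (1 / x)"
  shows "\<forall>x. x \<noteq> 0 \<longrightarrow> poly (p - q) x = x ^ D * poly (p - q) (1 / x)"
proof (intro allI impI)
  fix x :: real assume x: "x \<noteq> 0"
  have "poly (p - q) x = poly p x - poly q x" by (rule poly_diff)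
  also have "\<dots> = x ^ D * poly p (1 / x) - x ^ D * poly q (1 / x)"
    using assms(1)[rule_format, OF x] assms(2)[rule_format, OF x] by (simp only:)
  also have "\<dots> = x ^ D * poly (p - q) (1 / x)" by (simp only: poly_diff right_diff_distrib)
  finally show "poly (p - q) x = x ^ D * poly (p - q) (1 / x)" .
qed

lemma fplus_eq: "fplus n = pP n"
  unfolding fplus_def
proof (rule the_equality)
  show "\<exists>q. dB n = pP n + q \<and> (\<forall>x::real. x \<noteq> 0 \<longrightarrow> poly (pP n) x = x ^ n * poly (pP n) (1 / x))
       \<and> (\<forall>x::real. x \<noteq> 0 \<longrightarrow> poly q x = x ^ (n + 1) * poly q (1 / x))"
    using dB_split palP_pP palM_pM by blast
next
  fix p assume "\<exists>q. dB n = p + q \<and> (\<forall>x::real. x \<noteq> 0 \<longrightarrow> poly p x = x ^ n * poly p (1 / x))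
       \<and> (\<forall>x::real. x \<noteq> 0 \<longrightarrow> poly q x = x ^ (n + 1) * poly q (1 / x))"
  then obtain q where e: "dB n = p + q" and hp: "\<forall>x::real. x \<noteq> 0 \<longrightarrow> poly p x = x ^ n * poly p (1 / x)"
    and hq: "\<forall>x::real. x \<noteq> 0 \<longrightarrow> poly q x = x ^ (n + 1) * poly q (1 / x)" by blast
  have r1: "p - pP n = pM n - q" using e dB_split[of n] by (simp add: algebra_simps)
  have "p - pP n = 0"
  proof (rule uniq)
    show "\<forall>x. x \<noteq> 0 \<longrightarrow> poly (p - pP n) x = x ^ n * poly (p - pP n) (1 / x)"
      by (rule pal_diff[OF hp palP_pP])
    show "\<forall>x. x \<noteq> 0 \<longrightarrow> poly (p - pP n) x = x ^ (n + 1) * poly (p - pP n) (1 / x)"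
      unfolding r1 by (rule pal_diff[OF palM_pM hq])
  qed
  thus "p = pP n" by simp
qed

lemma fminus_eq: "fminus n = pM n"
  unfolding fminus_def
proof (rule the_equality)
  show "\<exists>p. dB n = p + pM n \<and> (\<forall>x::real. x \<noteq> 0 \<longrightarrow> poly p x = x ^ n * poly p (1 / x))
       \<and> (\<forall>x::real. x \<noteq> 0 \<longrightarrow> poly (pM n) x = x ^ (n + 1) * poly (pM n) (1 / x))"
    using dB_split palP_pP palM_pM by blast
next
  fix q assume "\<exists>p. dB n = p + q \<and> (\<forall>x::real. x \<noteq> 0 \<longrightarrow> poly p x = x ^ n * poly p (1 / x))
       \<and> (\<forall>x::real. x \<noteq> 0 \<longrightarrow> poly q x = x ^ (n + 1) * poly q (1 / x))"
  then obtain p where e: "dB n = p + q" and hp: "\<forall>x::real. x \<noteq> 0 \<longrightarrow> poly p x = x ^ n * poly p (1 / x)"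
    and hq: "\<forall>x::real. x \<noteq> 0 \<longrightarrow> poly q x = x ^ (n + 1) * poly q (1 / x)" by blast
  have r1: "q - pM n = pP n - p" using e dB_split[of n] by (simp add: algebra_simps)
  have "q - pM n = 0"
  proof (rule uniq)
    show "\<forall>x. x \<noteq> 0 \<longrightarrow> poly (q - pM n) x = x ^ n * poly (q - pM n) (1 / x)"
      unfolding r1 by (rule pal_diff[OF palP_pP hp])
    show "\<forall>x. x \<noteq> 0 \<longrightarrow> poly (q - pM n) x = x ^ (n + 1) * poly (q - pM n) (1 / x)"
      by (rule pal_diff[OF hq palM_pM])
  qed
  thus "q = pM n" by simp
qed

theorem corollary7p9:
  fixes n k :: nat
  assumes "n \<ge> 2" and "k \<ge> 1"
  shows "(coeff (fplus n) k =
           (2 * real k - 1) * coeff (fplus (n - 1)) k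
         + 2 * (real n - real k) * coeff (fplus (n - 1)) (k - 1)
         + 2 * (real n - 1) * coeff (fplus (n - 2)) (k - 1)
         + coeff (dB (n - 1)) k)
       \<and> (coeff (fminus n) k =
           (2 * real k - 1) * coeff (fminus (n - 1)) k
         + 2 * (real n - real k) * coeff (fminus (n - 1)) (k - 1)
         + 2 * (real n - 1) * coeff (fminus (n - 2)) (k - 1)
         + coeff (dB (n - 1)) (k - 1))"
proof -
  obtain n' where n: "n = Suc (Suc n')" using assms(1) by (metis add_2_eq_Suc le_Suc_ex)
  have k: "k \<noteq> 0" using assms(2) by simp
  show ?thesis unfolding fplus_eq fminus_eq coeff_pP coeff_pM coeff_dB n
    using k by (simp del: Pc.simps Mc.simps add: Pc.simps(3) Mc.simps(3))
qed


end
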